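(* Let $\mathcal{X}\subset\mathbb{R}^p$, $\mathcal{Y}\subset\mathbb{R}^q$ be closed convex sets with $\mathcal{Z}=\mathcal{X}\times\mathcal{Y}$ compact and $\max_{\mathbf{z},\mathbf{z}'\in\mathcal{Z}}\|\mathbf{z}-\mathbf{z}'\|\le D$, let $f:\mathcal{X}\times\mathcal{Y}\to\mathbb{R}$ be continuous, and let $F(\mathbf{x},\mathbf{y})=\partial_xf(\mathbf{x},\mathbf{y})\times\partial_y[-f(\mathbf{x},\mathbf{y})]$ be $\rho$-weakly monotone ($\rho>0$), single-valued and $L$-Lipschitz continuous on $\mathcal{Z}$, with $\mathrm{MVI}(F,\mathcal{Z})$ having a solution. Run the inexact proximal point method with $\gamma=\frac1{2\rho}$, $\theta_k=(k+1)^\alpha$ ($\alpha\ge1$), and $K=\frac{16\rho^2D^2(\alpha+1)}{\epsilon^2}$ stages: from $\mathbf{z}_0\in\mathcal{Z}$, for $k=0,\dots,K-1$, with $F_k(\mathbf{z})=F(\mathbf{z})+\gamma^{-1}(\mathbf{z}-\mathbf{z}_k)$, let $\mathbf{z}_{k+1}=\mathbf{z}^{(T_k)}$ where $\mathbf{z}^{(0)}=\mathbf{z}_k$ and $\mathbf{z}^{(t+1)}=\mathrm{Proj}_{\mathcal{Z}}(\mathbf{z}^{(t)}-\eta_kF_k(\mathbf{z}^{(t)}))$ with $\eta_k=\frac{\rho}{2(L+2\rho)^2}$ and $T_k=1+\frac{4(L+2\rho)^2}{\rho^2}\log\big(\frac{8(L+2\rho)^2(k+1)}{\rho^2}\big)$.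 Output $\mathbf{z}_\tau$ with $\mathrm{Prob}(\tau=k)=\theta_k/\sum_{l=0}^{K-1}\theta_l$ and let $\bar{\mathbf{z}}_\tau=(\bar{\mathbf{u}}_\tau,\bar{\mathbf{v}}_\tau)$ be the solution of $\mathrm{SVI}(F^\gamma_{\mathbf{z}_\tau},\mathcal{Z})$ with $F^\gamma_{\mathbf{w}}(\mathbf{z})=F(\mathbf{z})+\gamma^{-1}(\mathbf{z}-\mathbf{w})$. Then $$\mathbb{E}\|\mathbf{z}_\tau-\bar{\mathbf{z}}_\tau\|^2\le\gamma^2\epsilon^2,\qquad\mathbb{E}\big[\mathrm{dist}^2\big(0,\partial(f(\bar{\mathbf{u}}_\tau,\bar{\mathbf{v}}_\tau)+1_{\mathcal{Z}}(\bar{\mathbf{u}}_\tau,\bar{\mathbf{v}}_\tau))\big)\big]\le\epsilon^2,$$ and the total iteration complexity $\sum_{k<K}T_k$ is $O\big(\log(\frac1\epsilon)\frac{L^2}{\epsilon^2}\big)$.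
   Context: $\partial$ is the Fréchet subdifferential ($\partial h(\mathbf{x})=\{\boldsymbol{\zeta}:h(\mathbf{x}')\ge h(\mathbf{x})+\boldsymbol{\zeta}^\top(\mathbf{x}'-\mathbf{x})+o(\|\mathbf{x}'-\mathbf{x}\|)\}$), $\partial_x,\partial_y$ partial ones; $1_{\mathcal{S}}$ is the indicator of $\mathcal{S}$; $\partial(f+1_{\mathcal{Z}})(\mathbf{x},\mathbf{y}):=\partial_x[f(\mathbf{x},\mathbf{y})+1_{\mathcal{X}}(\mathbf{x})]\times\partial_y[-f(\mathbf{x},\mathbf{y})+1_{\mathcal{Y}}(\mathbf{y})]$; $\mathrm{dist}$ is Euclidean distance; $\mathrm{Proj}_{\mathcal{Z}}$ Euclidean projection. $F$ is $\rho$-weakly monotone if $\langle F(\mathbf{z})-F(\mathbf{z}'),\mathbf{z}-\mathbf{z}'\rangle\ge-\rho\|\mathbf{z}-\mathbf{z}'\|^2$. $\mathrm{MVI}(F,\mathcal{Z})$: find $\mathbf{z}_*\in\mathcal{Z}$ with $\langle F(\mathbf{z}),\mathbf{z}-\mathbf{z}_*\rangle\ge0$ for all $\mathbf{z}\in\mathcal{Z}$. $\mathrm{SVI}(G,\mathcal{Z})$: find $\mathbf{z}^*\in\mathcal{Z}$ with $\langle G(\mathbf{z}^* ),\mathbf{z}-\mathbf{z}^*\rangle\ge0$ for all $\mathbf{z}\in\mathcal{Z}$ (unique for $G=F^\gamma_{\mathbf{w}}$). *)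

theory Defs
  imports "HOL-Analysis.Analysis" "HOL-Library.Landau_Symbols"
begin

text \<open>Frechet subdifferential of the extended-valued function h + 1_S at x
  (empty when x is outside S, where h + 1_S is +infinity).\<close>
definition frechet_subdiff_on :: "'a::real_inner set \<Rightarrow> ('a \<Rightarrow> real) \<Rightarrow> 'a \<Rightarrow> 'a set" where
  "frechet_subdiff_on S h x =
     {\<zeta>. x \<in> S \<and> (\<forall>e>0. \<exists>d>0. \<forall>x'\<in>S. norm (x' - x) < d \<longrightarrow>
            h x' \<ge> h x + inner \<zeta> (x' - x) - e * norm (x' - x))}"

definition frechet_subdiff :: "('a::real_inner \<Rightarrow> real) \<Rightarrow> 'a \<Rightarrow> 'a set" where
  "frechet_subdiff h x = frechet_subdiff_on UNIV h x"

text \<open>The set partial(f + 1_Z)(x,y) := partial_x[f + 1_X](x,y) times partial_y[-f + 1_Y](x,y).\<close>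
definition subdiff_plus_ind ::
  "'a::real_inner set \<Rightarrow> 'b::real_inner set \<Rightarrow> ('a \<Rightarrow> 'b \<Rightarrow> real) \<Rightarrow> 'a \<times> 'b \<Rightarrow> ('a \<times> 'b) set" where
  "subdiff_plus_ind X Y f z =
     frechet_subdiff_on X (\<lambda>x. f x (snd z)) (fst z) \<times> frechet_subdiff_on Y (\<lambda>y. - f (fst z) y) (snd z)"

definition weakly_monotone_on :: "real \<Rightarrow> 'a::real_inner set \<Rightarrow> ('a \<Rightarrow> 'a) \<Rightarrow> bool" where
  "weakly_monotone_on \<rho> Z F \<longleftrightarrow>
     (\<forall>z\<in>Z. \<forall>z'\<in>Z. inner (F z - F z') (z - z') \<ge> - \<rho> * (norm (z - z'))\<^sup>2)"

definition mvi_sol :: "('a::real_inner \<Rightarrow> 'a) \<Rightarrow> 'a set \<Rightarrow> 'a \<Rightarrow> bool" where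
  "mvi_sol F Z z \<longleftrightarrow> z \<in> Z \<and> (\<forall>z'\<in>Z. inner (F z') (z' - z) \<ge> 0)"

definition svi_sol :: "('a::real_inner \<Rightarrow> 'a) \<Rightarrow> 'a set \<Rightarrow> 'a \<Rightarrow> bool" where
  "svi_sol G Z z \<longleftrightarrow> z \<in> Z \<and> (\<forall>z'\<in>Z. inner (G z) (z' - z) \<ge> 0)"

definition pg_iter ::
  "('a::{real_inner,heine_borel} \<Rightarrow> 'a) \<Rightarrow> 'a set \<Rightarrow> real \<Rightarrow> real \<Rightarrow> 'a \<Rightarrow> nat \<Rightarrow> 'a" where
  "pg_iter F Z \<gamma> \<eta> w t =
     ((\<lambda>z. closest_point Z (z - \<eta> *\<^sub>R (F z + (1 / \<gamma>) *\<^sub>R (z - w)))) ^^ t) w"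

primrec ippm ::
  "('a::{real_inner,heine_borel} \<Rightarrow> 'a) \<Rightarrow> 'a set \<Rightarrow> real \<Rightarrow> (nat \<Rightarrow> real) \<Rightarrow> (nat \<Rightarrow> nat) \<Rightarrow> 'a \<Rightarrow> nat \<Rightarrow> 'a" where
  "ippm F Z \<gamma> \<eta> T z0 0 = z0"
| "ippm F Z \<gamma> \<eta> T z0 (Suc k) = pg_iter F Z \<gamma> (\<eta> k) (ippm F Z \<gamma> \<eta> T z0 k) (T k)"

end

theory Submission
  imports Defs
begin


lemma proj_contr:
  fixes G :: "'c::euclidean_space \<Rightarrow> 'c"
  assumes cvx: "convex Z" and cl: "closed Z" and ne: "Z \<noteq> {}"
    and mu: "\<mu> > 0" and ell: "lc \<ge> \<mu>"
    and sm: "\<forall>z\<in>Z. \<forall>z'\<in>Z. inner (G z - G z') (z - z') \<ge> \<mu> * (norm (z - z'))\<^sup>2"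
    and lp: "\<forall>z\<in>Z. \<forall>z'\<in>Z. norm (G z - G z') \<le> lc * norm (z - z')"
    and z: "z \<in> Z" and z': "z' \<in> Z"
  shows "norm (closest_point Z (z - (\<mu> / (2 * lc\<^sup>2)) *\<^sub>R G z) - closest_point Z (z' - (\<mu> / (2 * lc\<^sup>2)) *\<^sub>R G z'))
         \<le> sqrt (1 - 3 * \<mu>\<^sup>2 / (4 * lc\<^sup>2)) * norm (z - z')"
proof -
  define \<eta> where "\<eta> = \<mu> / (2 * lc\<^sup>2)"
  define d where "d = z - z'"
  define g where "g = G z - G z'"
  have lpos: "lc > 0" using mu ell by linarith
  have eta: "\<eta> > 0" unfolding \<eta>_def using mu lpos by simp
  have h1: "norm (closest_point Z (z - \<eta> *\<^sub>R G z) - closest_point Z (z' - \<eta> *\<^sub>R G z'))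
      \<le> norm (d - \<eta> *\<^sub>R g)"
    using closest_point_lipschitz[OF cvx cl ne, of "z - \<eta> *\<^sub>R G z" "z' - \<eta> *\<^sub>R G z'"]
    by (simp add: dist_norm d_def g_def algebra_simps)
  have ig: "inner g d \<ge> \<mu> * (norm d)\<^sup>2" using sm z z' by (simp add: g_def d_def)
  have ng: "norm g \<le> lc * norm d" using lp z z' by (simp add: g_def d_def)
  have ng2: "(norm g)\<^sup>2 \<le> lc\<^sup>2 * (norm d)\<^sup>2"
    by (metis ng norm_ge_zero power_mono power_mult_distrib)
  have "(norm (d - \<eta> *\<^sub>R g))\<^sup>2 = (norm d)\<^sup>2 - 2 * \<eta> * inner g d + \<eta>\<^sup>2 * (norm g)\<^sup>2"
    unfolding power2_norm_eq_inner by (simp add: inner_diff_left inner_diff_right inner_commute algebra_simps power2_eq_square del: dot_square_norm)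
  also have "\<dots> \<le> (norm d)\<^sup>2 - 2 * \<eta> * (\<mu> * (norm d)\<^sup>2) + \<eta>\<^sup>2 * (lc\<^sup>2 * (norm d)\<^sup>2)"
    using ig ng2 eta by (intro add_mono diff_mono mult_left_mono) auto
  also have "\<dots> = (1 - 3 * \<mu>\<^sup>2 / (4 * lc\<^sup>2)) * (norm d)\<^sup>2"
    unfolding \<eta>_def using lpos by (simp add: field_simps power2_eq_square)
  finally have "(norm (d - \<eta> *\<^sub>R g))\<^sup>2 \<le> (1 - 3 * \<mu>\<^sup>2 / (4 * lc\<^sup>2)) * (norm d)\<^sup>2" .
  hence "norm (d - \<eta> *\<^sub>R g) \<le> sqrt ((1 - 3 * \<mu>\<^sup>2 / (4 * lc\<^sup>2)) * (norm d)\<^sup>2)"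
    using real_le_rsqrt by blast
  also have "\<dots> = sqrt (1 - 3 * \<mu>\<^sup>2 / (4 * lc\<^sup>2)) * norm d"
    by (simp add: real_sqrt_mult)
  finally show ?thesis using h1 unfolding \<eta>_def d_def by linarith
qed

lemma svi_unique:
  fixes G :: "'c::euclidean_space \<Rightarrow> 'c"
  assumes mu: "\<mu> > 0"
    and sm: "\<forall>z\<in>Z. \<forall>z'\<in>Z. inner (G z - G z') (z - z') \<ge> \<mu> * (norm (z - z'))\<^sup>2"
    and a: "svi_sol G Z a" and b: "svi_sol G Z b"
  shows "a = b"
proof -
  have aZ: "a \<in> Z" and bZ: "b \<in> Z" using a b by (auto simp: svi_sol_def)
  have 1: "inner (G a) (b - a) \<ge> 0" using a bZ by (auto simp: svi_sol_def)
  have 2: "inner (G b) (a - b) \<ge> 0" using b aZ by (auto simp: svi_sol_def)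
  have "inner (G a - G b) (a - b) \<le> 0" using 1 2
    by (simp add: inner_diff_left inner_diff_right inner_commute algebra_simps)
  moreover have "inner (G a - G b) (a - b) \<ge> \<mu> * (norm (a - b))\<^sup>2" using sm aZ bZ by blast
  ultimately have "\<mu> * (norm (a - b))\<^sup>2 \<le> 0" by linarith
  hence "(norm (a - b))\<^sup>2 \<le> 0" using mu by (simp add: mult_le_0_iff)
  thus ?thesis by simp
qed

lemma fix_imp_svi:
  fixes G :: "'c::euclidean_space \<Rightarrow> 'c"
  assumes cvx: "convex Z" and cl: "closed Z" and ne: "Z \<noteq> {}" and eta: "\<eta> > 0"
    and fx: "closest_point Z (zb - \<eta> *\<^sub>R G zb) = zb"
  shows "svi_sol G Z zb"
proof -
  have zb: "zb \<in> Z" using closest_point_in_set[OF cl ne] fx by metis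
  have "inner (G zb) (x - zb) \<ge> 0" if x: "x \<in> Z" for x
  proof -
    have "inner ((zb - \<eta> *\<^sub>R G zb) - zb) (x - zb) \<le> 0"
      using closest_point_dot[OF cvx cl x, of "zb - \<eta> *\<^sub>R G zb"] fx by simp
    hence "- \<eta> * inner (G zb) (x - zb) \<le> 0" by simp
    thus ?thesis using eta by (simp add: zero_le_mult_iff)
  qed
  thus ?thesis using zb by (auto simp: svi_sol_def)
qed

lemma svi_the:
  fixes G :: "'c::euclidean_space \<Rightarrow> 'c"
  assumes cvx: "convex Z" and cl: "closed Z" and ne: "Z \<noteq> {}"
    and mu: "\<mu> > 0" and ell: "lc \<ge> \<mu>"
    and sm: "\<forall>z\<in>Z. \<forall>z'\<in>Z. inner (G z - G z') (z - z') \<ge> \<mu> * (norm (z - z'))\<^sup>2"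
    and lp: "\<forall>z\<in>Z. \<forall>z'\<in>Z. norm (G z - G z') \<le> lc * norm (z - z')"
  shows "svi_sol G Z (THE z. svi_sol G Z z)"
    and "closest_point Z ((THE z. svi_sol G Z z) - (\<mu> / (2 * lc\<^sup>2)) *\<^sub>R G (THE z. svi_sol G Z z))
          = (THE z. svi_sol G Z z)"
proof -
  define P where "P z = closest_point Z (z - (\<mu> / (2 * lc\<^sup>2)) *\<^sub>R G z)" for z
  define c where "c = sqrt (1 - 3 * \<mu>\<^sup>2 / (4 * lc\<^sup>2))"
  have lpos: "lc > 0" using mu ell by linarith
  have "\<mu>\<^sup>2 \<le> lc\<^sup>2" using mu ell by (simp add: power_mono)
  hence "3 * \<mu>\<^sup>2 / (4 * lc\<^sup>2) \<le> 3/4" using lpos by (simp add: field_simps)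
  moreover have "3 * \<mu>\<^sup>2 / (4 * lc\<^sup>2) > 0" using mu lpos by simp
  ultimately have c0: "0 \<le> c" and c1: "c < 1" unfolding c_def by auto
  have "\<exists>!x\<in>Z. P x = x"
  proof (rule Banach_fix[OF _ ne c0 c1])
    show "complete Z" using cl by (simp add: complete_eq_closed)
    show "P ` Z \<subseteq> Z" unfolding P_def using closest_point_in_set[OF cl ne] by auto
    show "dist (P x) (P y) \<le> c * dist x y" if "x \<in> Z" "y \<in> Z" for x y
      unfolding P_def c_def dist_norm using proj_contr[OF cvx cl ne mu ell sm lp that] .
  qed
  then obtain zb where zb: "zb \<in> Z" "P zb = zb" by blast
  have eta: "\<mu> / (2 * lc\<^sup>2) > 0" using mu lpos by simp
  have s: "svi_sol G Z zb" using fix_imp_svi[OF cvx cl ne eta] zb unfolding P_def by blast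
  have "(THE z. svi_sol G Z z) = zb"
    using s svi_unique[OF mu sm] by blast
  thus "svi_sol G Z (THE z. svi_sol G Z z)" using s by simp
  show "closest_point Z ((THE z. svi_sol G Z z) - (\<mu> / (2 * lc\<^sup>2)) *\<^sub>R G (THE z. svi_sol G Z z))
          = (THE z. svi_sol G Z z)" using zb \<open>(THE z. svi_sol G Z z) = zb\<close> unfolding P_def by simp
qed

lemma iter_bound:
  fixes P :: "'c::euclidean_space \<Rightarrow> 'c"
  assumes PZ: "\<And>z. z \<in> Z \<Longrightarrow> P z \<in> Z"
    and contr: "\<And>z z'. z \<in> Z \<Longrightarrow> z' \<in> Z \<Longrightarrow> norm (P z - P z') \<le> c * norm (z - z')"
    and c0: "c \<ge> 0" and zb: "zb \<in> Z" "P zb = zb" and w: "w \<in> Z"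
  shows "(P ^^ t) w \<in> Z \<and> norm ((P ^^ t) w - zb) \<le> c ^ t * norm (w - zb)"
proof (induction t)
  case 0 then show ?case using w by simp
next
  case (Suc t)
  have "norm ((P ^^ Suc t) w - zb) = norm (P ((P ^^ t) w) - P zb)" using zb by simp
  also have "\<dots> \<le> c * norm ((P ^^ t) w - zb)" using contr Suc zb by blast
  also have "\<dots> \<le> c * (c ^ t * norm (w - zb))" using Suc c0 by (simp add: mult_left_mono)
  finally show ?case using Suc PZ by simp
qed



lemma abel_bound:
  fixes \<theta> a :: "nat \<Rightarrow> real"
  assumes mono: "\<And>k. \<theta> k \<le> \<theta> (Suc k)" and th0: "\<And>k. \<theta> k \<ge> 0"
    and a0: "\<And>k. a k \<ge> 0" and aB: "\<And>k. a k \<le> B"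
  shows "(\<Sum>k<Suc n. \<theta> k * (a k - a (Suc k))) + \<theta> n * a (Suc n) \<le> \<theta> n * B"
proof (induction n)
  case 0 then show ?case using aB[of 0] th0[of 0] mult_left_mono[of "a 0" B "\<theta> 0"] by (simp add: algebra_simps)
next
  case (Suc n)
  have "(\<Sum>k<Suc (Suc n). \<theta> k * (a k - a (Suc k))) + \<theta> (Suc n) * a (Suc (Suc n))
      = (\<Sum>k<Suc n. \<theta> k * (a k - a (Suc k))) + \<theta> n * a (Suc n) + (\<theta> (Suc n) - \<theta> n) * a (Suc n)"
    by (simp add: algebra_simps)
  also have "\<dots> \<le> \<theta> n * B + (\<theta> (Suc n) - \<theta> n) * B"
    using Suc mono[of n] aB[of "Suc n"] by (intro add_mono mult_left_mono) auto
  finally show ?case by (simp add: algebra_simps)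
qed

lemma powr_step:
  fixes \<alpha> :: real and n :: nat
  assumes "\<alpha> \<ge> 0"
  shows "real (Suc n) powr (\<alpha> + 1) - real n powr (\<alpha> + 1) \<le> (\<alpha> + 1) * real (Suc n) powr \<alpha>"
proof (cases "n = 0")
  case True
  have "(\<alpha> + 1) \<ge> 1" using assms by simp
  then show ?thesis using True by simp
next
  case False
  hence npos: "real n > 0" by simp
  have "\<exists>z. real n < z \<and> z < real (Suc n) \<and>
        real (Suc n) powr (\<alpha> + 1) - real n powr (\<alpha> + 1) = (real (Suc n) - real n) * ((\<alpha> + 1) * z powr \<alpha>)"
  proof (rule MVT2)
    show "real n < real (Suc n)" by simp
    fix x assume "real n \<le> x" "x \<le> real (Suc n)"
      hence x: "x > 0" using npos by linarith
      show "((\<lambda>x. x powr (\<alpha> + 1)) has_real_derivative (\<alpha> + 1) * x powr \<alpha>) (at x)"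
        using has_real_derivative_powr[OF x, of "\<alpha> + 1"] by simp
  qed
  then obtain z where z: "real n < z" "z < real (Suc n)"
    "real (Suc n) powr (\<alpha> + 1) - real n powr (\<alpha> + 1) = (\<alpha> + 1) * z powr \<alpha>" by auto
  have "z powr \<alpha> \<le> real (Suc n) powr \<alpha>" using z npos assms by (intro powr_mono2) auto
  thus ?thesis using z(3) assms by (simp add: mult_left_mono)
qed

lemma sum_powr_lower:
  fixes \<alpha> :: real
  assumes "\<alpha> \<ge> 0"
  shows "(\<Sum>k<n. real (k + 1) powr \<alpha>) \<ge> real n powr (\<alpha> + 1) / (\<alpha> + 1)"
proof (induction n)
  case 0 then show ?case by simp
next
  case (Suc n)
  have "real (Suc n) powr (\<alpha> + 1) \<le> real n powr (\<alpha> + 1) + (\<alpha> + 1) * real (Suc n) powr \<alpha>"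
    using powr_step[OF assms, of n] by linarith
  hence "real (Suc n) powr (\<alpha> + 1) / (\<alpha> + 1) \<le> (real n powr (\<alpha> + 1) + (\<alpha> + 1) * real (Suc n) powr \<alpha>) / (\<alpha> + 1)"
    by (rule divide_right_mono) (use assms in simp)
  also have "\<dots> = real n powr (\<alpha> + 1) / (\<alpha> + 1) + real (Suc n) powr \<alpha>"
    using assms by (simp add: add_divide_distrib)
  also have "\<dots> \<le> (\<Sum>k<Suc n. real (k + 1) powr \<alpha>)" using Suc by simp
  finally show ?case .
qed

lemma ct_bound:
  fixes x T :: real and k :: nat
  assumes x0: "0 < x" and x1: "x < 1" and T: "T \<ge> (2 / x) * ln (real k + 1)"
  shows "exp (- x * T / 2) \<le> 1 / (real k + 1)"
proof -
  have "x * T / 2 \<ge> ln (real k + 1)" using T x0 by (simp add: field_simps)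
  hence "exp (- x * T / 2) \<le> exp (- ln (real k + 1))" by simp
  also have "\<dots> = 1 / (real k + 1)" by (simp add: exp_minus divide_inverse)
  finally show ?thesis .
qed

lemma sqrt_pow_exp:
  fixes x :: real and t :: nat
  assumes "0 < x" "x < 1"
  shows "sqrt (1 - x) ^ t \<le> exp (- x * real t / 2)"
proof -
  have "1 - x \<le> exp (- x)" using exp_ge_add_one_self[of "- x"] by simp
  hence "(1 - x) ^ t \<le> exp (- x) ^ t" using assms by (intro power_mono) auto
  also have "\<dots> = exp (- x * real t)" by (simp add: exp_of_nat_mult[symmetric] mult.commute)
  finally have "sqrt ((1 - x) ^ t) \<le> sqrt (exp (- x * real t))" by simp
  also have "\<dots> = exp (- x * real t / 2)"
  proof -
    have "exp (- x * real t) = (exp (- x * real t / 2))\<^sup>2"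
      by (simp add: power2_eq_square exp_add[symmetric])
    thus ?thesis by simp
  qed
  finally show ?thesis by (simp add: real_sqrt_power)
qed



lemma nat_ceil_le: "(x::real) \<ge> 0 \<Longrightarrow> real (nat \<lceil>x\<rceil>) \<le> x + 1"
  by linarith

lemma bigo_part:
  fixes c1 b r A L :: real
  assumes c1: "c1 \<ge> 0" and b: "b > 0" and r: "r > 0" and A: "A \<ge> 0" and Lp: "L > 0"
  shows "(\<lambda>e. real (\<Sum>k<nat \<lceil>A / e\<^sup>2\<rceil>. nat \<lceil>1 + c1 * ln (b * real (k + 1) / r)\<rceil>))
           \<in> O[at_right 0](\<lambda>e. ln (1 / e) * L\<^sup>2 / e\<^sup>2)"
proof -
  define M where "M = 2 + c1 * (\<bar>ln (b / r)\<bar> + ln (A + 1) + 2)"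
  define C where "C = (A + 1) * M / L\<^sup>2"
  have "eventually (\<lambda>e. norm (real (\<Sum>k<nat \<lceil>A / e\<^sup>2\<rceil>. nat \<lceil>1 + c1 * ln (b * real (k + 1) / r)\<rceil>))
           \<le> C * norm (ln (1 / e) * L\<^sup>2 / e\<^sup>2)) (at_right 0)"
  proof (rule eventually_at_rightI)
    show "(0::real) < exp (- 1)" by simp
    fix e :: real assume "e \<in> {0<..<exp (- 1)}"
    hence e0: "e > 0" and e1: "e < exp (- 1)" by auto
    have le: "ln (1 / e) \<ge> 1"
    proof -
      have "ln e < -1" using e1 e0 by (metis ln_exp ln_less_cancel_iff exp_gt_zero)
      thus ?thesis using e0 by (simp add: ln_div)
    qed
    have eless1: "e < 1" using e1 by (smt (verit) exp_less_one_iff)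
    define K where "K = nat \<lceil>A / e\<^sup>2\<rceil>"
    have KA: "real K \<le> (A + 1) / e\<^sup>2"
    proof -
      have "real K \<le> A / e\<^sup>2 + 1" unfolding K_def using A e0 by (intro nat_ceil_le) simp
      also have "1 \<le> 1 / e\<^sup>2" using e0 eless1 by (simp add: power_le_one field_simps)
      hence "A / e\<^sup>2 + 1 \<le> (A + 1) / e\<^sup>2" by (simp add: add_divide_distrib)
      finally show ?thesis .
    qed
    have lnK: "ln (real K) \<le> ln (A + 1) + 2 * ln (1 / e)" if "K > 0"
    proof -
      have "ln (real K) \<le> ln ((A + 1) / e\<^sup>2)" using KA that by simp
      also have "\<dots> = ln (A + 1) + 2 * ln (1 / e)" using A e0 by (simp add: ln_div ln_mult ln_realpow)
      finally show ?thesis .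
    qed
    have Tk: "real (nat \<lceil>1 + c1 * ln (b * real (k + 1) / r)\<rceil>) \<le> M * ln (1 / e)" if k: "k < K" for k
    proof -
      have "real (nat \<lceil>1 + c1 * ln (b * real (k + 1) / r)\<rceil>) \<le> 2 + c1 * \<bar>ln (b * real (k + 1) / r)\<bar>"
      proof -
        have "c1 * ln (b * real (k + 1) / r) \<le> c1 * \<bar>ln (b * real (k + 1) / r)\<bar>"
          using c1 by (intro mult_left_mono) auto
        moreover have "0 \<le> c1 * \<bar>ln (b * real (k + 1) / r)\<bar>" using c1 by simp
        ultimately show ?thesis by linarith
      qed
      also have "\<bar>ln (b * real (k + 1) / r)\<bar> \<le> \<bar>ln (b / r)\<bar> + ln (real K)"
      proof -
        have "ln (b * real (k + 1) / r) = ln (b / r) + ln (real (k + 1))"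
          using b r by (simp add: ln_mult ln_div)
        moreover have "0 \<le> ln (real (k + 1))" by simp
        moreover have "ln (real (k + 1)) \<le> ln (real K)" using k by simp
        ultimately show ?thesis by linarith
      qed
      hence "2 + c1 * \<bar>ln (b * real (k + 1) / r)\<bar> \<le> 2 + c1 * (\<bar>ln (b / r)\<bar> + ln (A + 1) + 2 * ln (1 / e))"
        using lnK[of] k c1 by (intro add_left_mono mult_left_mono) auto
      also have "\<dots> \<le> M * ln (1 / e)"
      proof -
        have "ln (A + 1) \<ge> 0" using A by simp
        have "2 + c1 * (\<bar>ln (b / r)\<bar> + ln (A + 1) + 2 * ln (1 / e))
            \<le> 2 * ln (1 / e) + c1 * ((\<bar>ln (b / r)\<bar> + ln (A + 1)) * ln (1 / e) + 2 * ln (1 / e))"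
          using le c1 \<open>ln (A + 1) \<ge> 0\<close>
          by (intro add_mono mult_left_mono) (auto simp: mult_le_cancel_left1)
        also have "\<dots> = M * ln (1 / e)" unfolding M_def by (simp add: algebra_simps)
        finally show ?thesis .
      qed
      finally show ?thesis .
    qed
    have M0: "M \<ge> 0" unfolding M_def using c1 A by simp
    have "real (\<Sum>k<K. nat \<lceil>1 + c1 * ln (b * real (k + 1) / r)\<rceil>)
        = (\<Sum>k<K. real (nat \<lceil>1 + c1 * ln (b * real (k + 1) / r)\<rceil>))" by simp
    also have "\<dots> \<le> (\<Sum>k<K. M * ln (1 / e))" using Tk by (intro sum_mono) auto
    also have "\<dots> = real K * (M * ln (1 / e))" by simp
    also have "\<dots> \<le> (A + 1) / e\<^sup>2 * (M * ln (1 / e))"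
      using KA M0 le by (intro mult_right_mono) auto
    also have "\<dots> = C * (ln (1 / e) * L\<^sup>2 / e\<^sup>2)" unfolding C_def using Lp e0 by (simp add: field_simps power2_eq_square)
    also have "\<dots> = C * norm (ln (1 / e) * L\<^sup>2 / e\<^sup>2)" using le by simp
    finally show "norm (real (\<Sum>k<nat \<lceil>A / e\<^sup>2\<rceil>. nat \<lceil>1 + c1 * ln (b * real (k + 1) / r)\<rceil>))
           \<le> C * norm (ln (1 / e) * L\<^sup>2 / e\<^sup>2)" unfolding K_def real_norm_def
      by (subst abs_of_nonneg[of "real _"]) (simp_all add: sum_nonneg)
  qed
  thus ?thesis by (rule bigoI)
qed



lemma subdiff_elem:
  fixes X :: "'a::real_inner set" and Y :: "'b::real_inner set"
    and f :: "'a \<Rightarrow> 'b \<Rightarrow> real" and F :: "'a \<times> 'b \<Rightarrow> 'a \<times> 'b"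
  assumes zb: "zb \<in> X \<times> Y"
    and svi: "\<forall>z'\<in>X \<times> Y. inner (F zb + v) (z' - zb) \<ge> 0"
    and hF: "frechet_subdiff (\<lambda>x. f x (snd zb)) (fst zb) \<times>
                     frechet_subdiff (\<lambda>y. - f (fst zb) y) (snd zb) = {F zb}"
  shows "- v \<in> subdiff_plus_ind X Y f zb"
proof -
  obtain u w where zbp: "zb = (u, w)" by force
  obtain gx gy where Fp: "F zb = (gx, gy)" by force
  obtain vx vy where vp: "v = (vx, vy)" by force
  have uX: "u \<in> X" and wY: "w \<in> Y" using zb zbp by auto
  have gx: "gx \<in> frechet_subdiff (\<lambda>x. f x w) u" and gy: "gy \<in> frechet_subdiff (\<lambda>y. - f u y) w"
  proof -
    have "(gx, gy) \<in> frechet_subdiff (\<lambda>x. f x (snd zb)) (fst zb) \<times>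
                     frechet_subdiff (\<lambda>y. - f (fst zb) y) (snd zb)" using hF Fp by simp
    thus "gx \<in> frechet_subdiff (\<lambda>x. f x w) u" "gy \<in> frechet_subdiff (\<lambda>y. - f u y) w"
      unfolding zbp by auto
  qed
  have ix: "inner (gx + vx) (x' - u) \<ge> 0" if "x' \<in> X" for x'
    using svi[rule_format, of "(x', w)"] that wY unfolding zbp vp using Fp[unfolded zbp] by (simp add: inner_Pair)
  have iy: "inner (gy + vy) (y' - w) \<ge> 0" if "y' \<in> Y" for y'
    using svi[rule_format, of "(u, y')"] that uX unfolding zbp vp using Fp[unfolded zbp] by (simp add: inner_Pair)
  have "- vx \<in> frechet_subdiff_on X (\<lambda>x. f x w) u"
    unfolding frechet_subdiff_on_def
  proof (intro CollectI conjI uX allI impI)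
    fix e :: real assume e: "e > 0"
    obtain d where d: "d > 0" "\<forall>x'. norm (x' - u) < d \<longrightarrow>
        f x' w \<ge> f u w + inner gx (x' - u) - e * norm (x' - u)"
      using gx e unfolding frechet_subdiff_def frechet_subdiff_on_def by blast
    show "\<exists>d>0. \<forall>x'\<in>X. norm (x' - u) < d \<longrightarrow> f u w + inner (- vx) (x' - u) - e * norm (x' - u) \<le> f x' w"
    proof (intro exI[of _ d] conjI ballI impI)
      show "d > 0" by fact
      fix x' assume x': "x' \<in> X" "norm (x' - u) < d"
      have "inner (- vx) (x' - u) \<le> inner gx (x' - u)" using ix[OF x'(1)] by (simp add: inner_add_left)
      moreover have "f x' w \<ge> f u w + inner gx (x' - u) - e * norm (x' - u)" using d x' by blast
      ultimately show "f u w + inner (- vx) (x' - u) - e * norm (x' - u) \<le> f x' w" by linarith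
    qed
  qed
  moreover have "- vy \<in> frechet_subdiff_on Y (\<lambda>y. - f u y) w"
    unfolding frechet_subdiff_on_def
  proof (intro CollectI conjI wY allI impI)
    fix e :: real assume e: "e > 0"
    obtain d where d: "d > 0" "\<forall>y'. norm (y' - w) < d \<longrightarrow>
        - f u y' \<ge> - f u w + inner gy (y' - w) - e * norm (y' - w)"
      using gy e unfolding frechet_subdiff_def frechet_subdiff_on_def by blast
    show "\<exists>d>0. \<forall>y'\<in>Y. norm (y' - w) < d \<longrightarrow> - f u w + inner (- vy) (y' - w) - e * norm (y' - w) \<le> - f u y'"
    proof (intro exI[of _ d] conjI ballI impI)
      show "d > 0" by fact
      fix y' assume y': "y' \<in> Y" "norm (y' - w) < d"
      have "inner (- vy) (y' - w) \<le> inner gy (y' - w)" using iy[OF y'(1)] by (simp add: inner_add_left)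
      moreover have "- f u y' \<ge> - f u w + inner gy (y' - w) - e * norm (y' - w)" using d y' by blast
      ultimately show "- f u w + inner (- vy) (y' - w) - e * norm (y' - w) \<le> - f u y'" by linarith
    qed
  qed
  ultimately show ?thesis unfolding subdiff_plus_ind_def zbp vp by simp
qed


lemma norm_add_sq:
  fixes p q :: "'c::real_inner"
  shows "(norm (p + q))\<^sup>2 = (norm p)\<^sup>2 + (norm q)\<^sup>2 + 2 * inner p q"
  unfolding power2_norm_eq_inner
  by (simp add: inner_add_left inner_add_right inner_commute del: dot_square_norm)


theorem corollary12:
  fixes X :: "'a::euclidean_space set" and Y :: "'b::euclidean_space set"
    and f :: "'a \<Rightarrow> 'b \<Rightarrow> real" and F :: "'a \<times> 'b \<Rightarrow> 'a \<times> 'b"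
    and \<rho> L D \<alpha> \<epsilon> :: real and z0 :: "'a \<times> 'b"
  assumes "closed X" "convex X" "closed Y" "convex Y" "compact (X \<times> Y)"
    and "\<forall>z\<in>X \<times> Y. \<forall>z'\<in>X \<times> Y. norm (z - z') \<le> D"
    and "continuous_on (X \<times> Y) (\<lambda>z. f (fst z) (snd z))"
    and "\<rho> > 0"
    and "\<forall>z\<in>X \<times> Y. frechet_subdiff (\<lambda>x. f x (snd z)) (fst z) \<times>
                     frechet_subdiff (\<lambda>y. - f (fst z) y) (snd z) = {F z}"
    and "weakly_monotone_on \<rho> (X \<times> Y) F"
    and "L-lipschitz_on (X \<times> Y) F"
    and "\<exists>z. mvi_sol F (X \<times> Y) z"
    and "\<alpha> \<ge> 1" and "\<epsilon> > 0" and "z0 \<in> X \<times> Y"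
  defines "\<gamma> \<equiv> 1 / (2 * \<rho>)"
    and "T \<equiv> \<lambda>k::nat. nat \<lceil>1 + 4 * (L + 2 * \<rho>)\<^sup>2 / \<rho>\<^sup>2 * ln (8 * (L + 2 * \<rho>)\<^sup>2 * real (k + 1) / \<rho>\<^sup>2)\<rceil>"
    and "K \<equiv> \<lambda>e::real. nat \<lceil>16 * \<rho>\<^sup>2 * D\<^sup>2 * (\<alpha> + 1) / e\<^sup>2\<rceil>"
    and "\<theta> \<equiv> \<lambda>k::nat. real (k + 1) powr \<alpha>"
    and "zs \<equiv> ippm F (X \<times> Y) (1 / (2 * \<rho>)) (\<lambda>_. \<rho> / (2 * (L + 2 * \<rho>)\<^sup>2))
                 (\<lambda>k::nat. nat \<lceil>1 + 4 * (L + 2 * \<rho>)\<^sup>2 / \<rho>\<^sup>2 * ln (8 * (L + 2 * \<rho>)\<^sup>2 * real (k + 1) / \<rho>\<^sup>2)\<rceil>) z0"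
    and "zbar \<equiv> \<lambda>w. THE z. svi_sol (\<lambda>z. F z + (2 * \<rho>) *\<^sub>R (z - w)) (X \<times> Y) z"
  shows "(\<Sum>k<K \<epsilon>. \<theta> k * (norm (zs k - zbar (zs k)))\<^sup>2) / (\<Sum>k<K \<epsilon>. \<theta> k) \<le> \<gamma>\<^sup>2 * \<epsilon>\<^sup>2 \<and>
         (\<Sum>k<K \<epsilon>. \<theta> k * (infdist 0 (subdiff_plus_ind X Y f (zbar (zs k))))\<^sup>2) / (\<Sum>k<K \<epsilon>. \<theta> k) \<le> \<epsilon>\<^sup>2 \<and>
         (L > 0 \<longrightarrow> (\<lambda>e. real (\<Sum>k<K e. T k)) \<in> O[at_right 0](\<lambda>e. ln (1 / e) * L\<^sup>2 / e\<^sup>2))"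
proof -
  let ?Z = "X \<times> Y"
  have Zcl: "closed ?Z" using assms(1,3) closed_Times by blast
  have Zcv: "convex ?Z" using assms(2,4) convex_Times by blast
  have Zne: "?Z \<noteq> {}" using assms(15) by blast
  have diam: "\<And>z z'. z \<in> ?Z \<Longrightarrow> z' \<in> ?Z \<Longrightarrow> norm (z - z') \<le> D" using assms(6) by blast
  have D0: "D \<ge> 0" using diam[OF assms(15) assms(15)] by simp
  have rho: "\<rho> > 0" using assms(8) .
  have L0: "L \<ge> 0" using assms(11) lipschitz_on_nonneg by blast
  have Flip: "\<And>z z'. z \<in> ?Z \<Longrightarrow> z' \<in> ?Z \<Longrightarrow> norm (F z - F z') \<le> L * norm (z - z')"
    using lipschitz_onD[OF assms(11)] by (simp add: dist_norm)
  define lc where "lc = L + 2 * \<rho>"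
  have lc: "lc \<ge> \<rho>" "lc > 0" "lc \<ge> 2 * \<rho>" unfolding lc_def using L0 rho by auto
  define G where "G w z = F z + (2 * \<rho>) *\<^sub>R (z - w)" for w z
  have smG: "\<forall>z\<in>?Z. \<forall>z'\<in>?Z. inner (G w z - G w z') (z - z') \<ge> \<rho> * (norm (z - z'))\<^sup>2" for w
  proof (intro ballI)
    fix z z' assume z: "z \<in> ?Z" and z': "z' \<in> ?Z"
    have wm: "inner (F z - F z') (z - z') \<ge> - \<rho> * (norm (z - z'))\<^sup>2"
      using assms(10) z z' unfolding weakly_monotone_on_def by blast
    have "G w z - G w z' = (F z - F z') + (2 * \<rho>) *\<^sub>R (z - z')"
      unfolding G_def by (simp add: algebra_simps)
    hence "inner (G w z - G w z') (z - z') = inner (F z - F z') (z - z') + 2 * \<rho> * (norm (z - z'))\<^sup>2"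
      by (simp add: inner_add_left power2_norm_eq_inner)
    thus "inner (G w z - G w z') (z - z') \<ge> \<rho> * (norm (z - z'))\<^sup>2" using wm by linarith
  qed
  have lpG: "\<forall>z\<in>?Z. \<forall>z'\<in>?Z. norm (G w z - G w z') \<le> lc * norm (z - z')" for w
  proof (intro ballI)
    fix z z' assume z: "z \<in> ?Z" and z': "z' \<in> ?Z"
    have "G w z - G w z' = (F z - F z') + (2 * \<rho>) *\<^sub>R (z - z')"
      unfolding G_def by (simp add: algebra_simps)
    hence "norm (G w z - G w z') \<le> norm (F z - F z') + norm ((2 * \<rho>) *\<^sub>R (z - z'))"
      by (metis norm_triangle_ineq)
    also have "\<dots> \<le> L * norm (z - z') + 2 * \<rho> * norm (z - z')"
      using Flip[OF z z'] rho by simp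
    finally show "norm (G w z - G w z') \<le> lc * norm (z - z')" unfolding lc_def by (simp add: algebra_simps)
  qed
  define \<eta> where "\<eta> = \<rho> / (2 * lc\<^sup>2)"
  define P where "P w z = closest_point ?Z (z - \<eta> *\<^sub>R G w z)" for w z
  define x where "x = 3 * \<rho>\<^sup>2 / (4 * lc\<^sup>2)"
  define c where "c = sqrt (1 - x)"
  have x0: "x > 0" unfolding x_def using rho lc by simp
  have x1: "x < 1"
  proof -
    have "\<rho>\<^sup>2 \<le> lc\<^sup>2" using rho lc by (simp add: power_mono)
    hence "x \<le> 3/4" unfolding x_def using lc by (simp add: field_simps)
    thus ?thesis by simp
  qed
  have c0: "c \<ge> 0" unfolding c_def using x1 by simp
  have zbar_eq: "zbar w = (THE z. svi_sol (G w) ?Z z)" for w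
    unfolding assms(21) G_def by simp
  have svi: "svi_sol (G w) ?Z (zbar w)" and fixp: "P w (zbar w) = zbar w" for w
    using svi_the[OF Zcv Zcl Zne rho lc(1) smG lpG, of w] unfolding zbar_eq P_def \<eta>_def by auto
  have zbarZ: "zbar w \<in> ?Z" for w using svi[of w] by (simp add: svi_sol_def)
  have contr: "norm (P w z - P w z') \<le> c * norm (z - z')" if "z \<in> ?Z" "z' \<in> ?Z" for w z z'
    using proj_contr[OF Zcv Zcl Zne rho lc(1) smG lpG that] unfolding P_def \<eta>_def c_def x_def .
  have PZ: "P w z \<in> ?Z" for w z unfolding P_def using closest_point_in_set[OF Zcl Zne] .
  have zs0: "zs 0 = z0" unfolding assms(20) by simp
  have zs_suc: "zs (Suc k) = (P (zs k) ^^ T k) (zs k)" for k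
    unfolding assms(20) assms(17) P_def G_def \<eta>_def lc_def by (simp add: pg_iter_def)
  have ib: "(P w ^^ t) w \<in> ?Z \<and> norm ((P w ^^ t) w - zbar w) \<le> c ^ t * norm (w - zbar w)"
    if "w \<in> ?Z" for w t
    by (rule iter_bound) (auto intro: PZ contr c0 zbarZ fixp that)
  have zsZ: "zs k \<in> ?Z" for k
  proof (induction k)
    case 0 then show ?case using zs0 assms(15) by simp
  next
    case (Suc k)
    then show ?case using ib[of "zs k" "T k"] unfolding zs_suc by simp
  qed
  have iter: "norm (zs (Suc k) - zbar (zs k)) \<le> c ^ T k * norm (zs k - zbar (zs k))" for k
    using ib[OF zsZ[of k], of "T k"] unfolding zs_suc by simp
  have cT: "c ^ T k \<le> 1 / (real k + 1)" for k
  proof -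
    have "c ^ T k \<le> exp (- x * real (T k) / 2)" unfolding c_def using sqrt_pow_exp[OF x0 x1] .
    also have "\<dots> \<le> 1 / (real k + 1)"
    proof (rule ct_bound[OF x0 x1])
      have r1: "real (T k) \<ge> 1 + 4 * lc\<^sup>2 / \<rho>\<^sup>2 * ln (8 * lc\<^sup>2 * real (k + 1) / \<rho>\<^sup>2)"
        unfolding assms(17) lc_def by linarith
      have "8 * lc\<^sup>2 / \<rho>\<^sup>2 \<ge> 1"
      proof -
        have "\<rho>\<^sup>2 \<le> lc\<^sup>2" using rho lc by (simp add: power_mono)
        hence "\<rho>\<^sup>2 \<le> 8 * lc\<^sup>2" using zero_le_power2[of lc] by linarith
        thus ?thesis using rho by (simp add: field_simps)
      qed
      hence "8 * lc\<^sup>2 * real (k + 1) / \<rho>\<^sup>2 \<ge> real (k + 1)"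
        using mult_left_mono[of 1 "8 * lc\<^sup>2 / \<rho>\<^sup>2" "real (k + 1)"] by (simp add: mult.commute)
      hence l1: "ln (8 * lc\<^sup>2 * real (k + 1) / \<rho>\<^sup>2) \<ge> ln (real k + 1)" by simp
      have l0: "ln (real k + 1) \<ge> 0" by simp
      have "2 / x * ln (real k + 1) = 8 * lc\<^sup>2 / (3 * \<rho>\<^sup>2) * ln (real k + 1)"
        unfolding x_def using rho lc by (simp add: field_simps)
      also have "\<dots> \<le> 4 * lc\<^sup>2 / \<rho>\<^sup>2 * ln (real k + 1)"
        using l0 rho by (intro mult_right_mono) (auto simp: field_simps)
      also have "\<dots> \<le> 4 * lc\<^sup>2 / \<rho>\<^sup>2 * ln (8 * lc\<^sup>2 * real (k + 1) / \<rho>\<^sup>2)"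
        using l1 by (intro mult_left_mono) auto
      finally show "2 / x * ln (real k + 1) \<le> real (T k)" using r1 by linarith
    qed
    finally show ?thesis .
  qed
  have cT0: "c ^ T k \<ge> 0" for k using c0 by simp
  obtain zst where zst: "mvi_sol F ?Z zst" using assms(12) by blast
  have zstZ: "zst \<in> ?Z" using zst by (simp add: mvi_sol_def)
  define a where "a k = (norm (zs k - zst))\<^sup>2" for k
  define d where "d k = (norm (zs k - zbar (zs k)))\<^sup>2" for k
  define e where "e k = c ^ T k" for k
  have a0: "a k \<ge> 0" for k unfolding a_def by simp
  have aD: "a k \<le> D\<^sup>2" for k unfolding a_def using diam[OF zsZ zstZ] by (simp add: power_mono)
  have key: "(norm (zbar (zs k) - zst))\<^sup>2 \<le> a k - d k" for k
  proof -
    let ?w = "zs k" and ?zb = "zbar (zs k)"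
    have s: "inner (G ?w ?zb) (zst - ?zb) \<ge> 0" using svi[of ?w] zstZ unfolding svi_sol_def by blast
    have m: "inner (F ?zb) (?zb - zst) \<ge> 0" using zst zbarZ unfolding mvi_sol_def by blast
    have "inner (G ?w ?zb) (zst - ?zb) = inner (F ?zb) (zst - ?zb) + 2 * \<rho> * inner (?zb - ?w) (zst - ?zb)"
      unfolding G_def by (simp add: inner_add_left)
    moreover have "inner (F ?zb) (zst - ?zb) = - inner (F ?zb) (?zb - zst)"
      by (simp add: inner_diff_right)
    ultimately have "2 * \<rho> * inner (?zb - ?w) (zst - ?zb) \<ge> 0" using s m by linarith
    hence ip: "inner (?w - ?zb) (?zb - zst) \<ge> 0" using rho
      by (simp add: zero_le_mult_iff inner_diff_left inner_diff_right inner_commute)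
    have "a k = (norm ((?w - ?zb) + (?zb - zst)))\<^sup>2" unfolding a_def by simp
    also have "\<dots> = d k + (norm (?zb - zst))\<^sup>2 + 2 * inner (?w - ?zb) (?zb - zst)"
      unfolding d_def by (rule norm_add_sq)
    finally show ?thesis using ip by linarith
  qed
  have step: "d k \<le> a k - a (Suc k) + 3 * D\<^sup>2 * e k" for k
  proof -
    let ?w = "zs k" and ?zb = "zbar (zs k)"
    define u where "u = ?zb - zst"
    define v where "v = zs (Suc k) - ?zb"
    have nu: "norm u \<le> D" unfolding u_def using diam[OF zbarZ zstZ] .
    have ek1: "e k \<le> 1" unfolding e_def using cT[of k]
      by (smt (verit) divide_le_eq_1_pos of_nat_0_le_iff)
    have nv: "norm v \<le> e k * D" unfolding v_def e_def
      using iter[of k] diam[OF zsZ zbarZ, of k "zs k"] cT0[of k]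
      by (smt (verit) mult_left_mono)
    have nv0: "norm v \<ge> 0" by simp
    have "a (Suc k) = (norm (u + v))\<^sup>2" unfolding a_def u_def v_def by simp
    also have "\<dots> \<le> (norm u + norm v)\<^sup>2" by (simp add: norm_triangle_ineq power_mono)
    also have "\<dots> = (norm u)\<^sup>2 + 2 * norm u * norm v + (norm v)\<^sup>2" by (simp add: power2_eq_square algebra_simps)
    also have "2 * norm u * norm v \<le> 2 * D * (e k * D)"
      using nu nv D0 by (intro mult_mono) auto
    also have "(norm v)\<^sup>2 \<le> (e k * D)\<^sup>2" using nv by (simp add: power_mono)
    also have "(e k * D)\<^sup>2 \<le> e k * D\<^sup>2"
    proof -
      have "(e k)\<^sup>2 \<le> e k" using ek1 cT0[of k] unfolding e_def by (simp add: power2_eq_square mult_left_le)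
      thus ?thesis using D0 by (simp add: power_mult_distrib mult_right_mono)
    qed
    finally have "a (Suc k) \<le> (norm u)\<^sup>2 + 3 * D\<^sup>2 * e k" by (simp add: power2_eq_square algebra_simps)
    thus ?thesis using key[of k] unfolding u_def by linarith
  qed
  have th0: "\<theta> k \<ge> 0" for k unfolding assms(19) by simp
  have thmono: "\<theta> k \<le> \<theta> (Suc k)" for k unfolding assms(19) using assms(13) by (intro powr_mono2) auto
  define S where "S = (\<Sum>k<K \<epsilon>. \<theta> k)"
  have sumd: "(\<Sum>k<K \<epsilon>. \<theta> k * d k) \<le> 4 * D\<^sup>2 * real (K \<epsilon>) powr \<alpha>"
  proof (cases "K \<epsilon>")
    case 0 then show ?thesis by simp
  next
    case (Suc n)
    have thn: "\<theta> n = real (K \<epsilon>) powr \<alpha>" unfolding assms(19) Suc by simp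
    have "(\<Sum>k<K \<epsilon>. \<theta> k * d k) \<le> (\<Sum>k<K \<epsilon>. \<theta> k * (a k - a (Suc k)) + 3 * D\<^sup>2 * (\<theta> k * e k))"
      using step th0 by (intro sum_mono) (smt (verit) mult_left_mono distrib_left mult.left_commute)
    also have "\<dots> = (\<Sum>k<Suc n. \<theta> k * (a k - a (Suc k))) + 3 * D\<^sup>2 * (\<Sum>k<K \<epsilon>. \<theta> k * e k)"
      unfolding Suc by (simp only: sum.distrib sum_distrib_left)
    finally have s1: "(\<Sum>k<K \<epsilon>. \<theta> k * d k) \<le> (\<Sum>k<Suc n. \<theta> k * (a k - a (Suc k))) + 3 * D\<^sup>2 * (\<Sum>k<K \<epsilon>. \<theta> k * e k)" .
    have s2: "(\<Sum>k<Suc n. \<theta> k * (a k - a (Suc k))) \<le> \<theta> n * D\<^sup>2"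
      using abel_bound[of \<theta> a "D\<^sup>2" n, OF thmono th0 a0 aD] th0[of n] a0[of "Suc n"] by (smt (verit) mult_nonneg_nonneg)
    have s3: "(\<Sum>k<K \<epsilon>. \<theta> k * e k) \<le> \<theta> n"
    proof -
      have "\<theta> k * e k \<le> real (K \<epsilon>) powr \<alpha> / real (K \<epsilon>)" if k: "k < K \<epsilon>" for k
      proof -
        have "\<theta> k * e k \<le> \<theta> k * (1 / (real k + 1))" unfolding e_def using cT th0 by (intro mult_left_mono) auto
        also have "\<dots> = real (k + 1) powr (\<alpha> - 1)" unfolding assms(19)
          by (simp add: powr_diff add.commute)
        also have "\<dots> \<le> real (K \<epsilon>) powr (\<alpha> - 1)" using k assms(13) by (intro powr_mono2) auto
        also have "\<dots> = real (K \<epsilon>) powr \<alpha> / real (K \<epsilon>)" using Suc by (simp add: powr_diff)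
        finally show ?thesis .
      qed
      hence "(\<Sum>k<K \<epsilon>. \<theta> k * e k) \<le> (\<Sum>k<K \<epsilon>. real (K \<epsilon>) powr \<alpha> / real (K \<epsilon>))" by (intro sum_mono) auto
      also have "\<dots> = real (K \<epsilon>) powr \<alpha>" using Suc by simp
      finally show ?thesis using thn by simp
    qed
    have "3 * D\<^sup>2 * (\<Sum>k<K \<epsilon>. \<theta> k * e k) \<le> 3 * D\<^sup>2 * \<theta> n"
      using s3 by (intro mult_left_mono) auto
    moreover have "\<theta> n * D\<^sup>2 + 3 * D\<^sup>2 * \<theta> n = 4 * D\<^sup>2 * real (K \<epsilon>) powr \<alpha>"
      using thn by (simp add: algebra_simps)
    ultimately show ?thesis using s1 s2 by linarith
  qed
  have Slow: "S \<ge> real (K \<epsilon>) * real (K \<epsilon>) powr \<alpha> / (\<alpha> + 1)"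
  proof -
    have "S \<ge> real (K \<epsilon>) powr (\<alpha> + 1) / (\<alpha> + 1)"
      unfolding S_def assms(19) using sum_powr_lower[of \<alpha> "K \<epsilon>"] assms(13) by simp
    moreover have "real (K \<epsilon>) powr (\<alpha> + 1) = real (K \<epsilon>) * real (K \<epsilon>) powr \<alpha>"
      by (cases "K \<epsilon> = 0") (auto simp: powr_add)
    ultimately show ?thesis by simp
  qed
  have Kbig: "real (K \<epsilon>) \<ge> 16 * \<rho>\<^sup>2 * D\<^sup>2 * (\<alpha> + 1) / \<epsilon>\<^sup>2" unfolding assms(18) by linarith
  have c1: "(\<Sum>k<K \<epsilon>. \<theta> k * d k) / S \<le> \<gamma>\<^sup>2 * \<epsilon>\<^sup>2"
  proof (cases "K \<epsilon> = 0")
    case True then show ?thesis by (simp add: S_def)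
  next
    case False
    have Kp: "real (K \<epsilon>) powr \<alpha> > 0" using False by simp
    have Sp: "S > 0" using Slow False Kp assms(13)
      by (smt (verit) divide_pos_pos mult_pos_pos of_nat_0_less_iff gr0I)
    have "4 * D\<^sup>2 \<le> \<gamma>\<^sup>2 * \<epsilon>\<^sup>2 * real (K \<epsilon>) / (\<alpha> + 1)"
    proof -
      have "\<epsilon>\<^sup>2 * real (K \<epsilon>) \<ge> 16 * \<rho>\<^sup>2 * D\<^sup>2 * (\<alpha> + 1)" using Kbig assms(14)
        by (simp add: field_simps)
      have q: "\<gamma>\<^sup>2 * \<epsilon>\<^sup>2 * real (K \<epsilon>) / (\<alpha> + 1) = \<epsilon>\<^sup>2 * real (K \<epsilon>) / (4 * \<rho>\<^sup>2 * (\<alpha> + 1))"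
        unfolding assms(16) using rho assms(13) by (simp add: power2_eq_square field_simps)
      have qp: "4 * \<rho>\<^sup>2 * (\<alpha> + 1) > 0" using rho assms(13) by simp
      have "4 * D\<^sup>2 * (4 * \<rho>\<^sup>2 * (\<alpha> + 1)) = 16 * \<rho>\<^sup>2 * D\<^sup>2 * (\<alpha> + 1)" by simp
      hence "4 * D\<^sup>2 \<le> \<epsilon>\<^sup>2 * real (K \<epsilon>) / (4 * \<rho>\<^sup>2 * (\<alpha> + 1))"
        using \<open>\<epsilon>\<^sup>2 * real (K \<epsilon>) \<ge> 16 * \<rho>\<^sup>2 * D\<^sup>2 * (\<alpha> + 1)\<close> qp by (simp add: pos_le_divide_eq mult.commute mult.left_commute)
      thus ?thesis using q by simp
    qed
    hence "4 * D\<^sup>2 * real (K \<epsilon>) powr \<alpha> \<le> (\<gamma>\<^sup>2 * \<epsilon>\<^sup>2 * real (K \<epsilon>) / (\<alpha> + 1)) * real (K \<epsilon>) powr \<alpha>"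
      using Kp by (intro mult_right_mono) auto
    also have "\<dots> = \<gamma>\<^sup>2 * \<epsilon>\<^sup>2 * (real (K \<epsilon>) * real (K \<epsilon>) powr \<alpha> / (\<alpha> + 1))"
      by simp
    also have "\<dots> \<le> \<gamma>\<^sup>2 * \<epsilon>\<^sup>2 * S" using Slow by (intro mult_left_mono) auto
    finally have "(\<Sum>k<K \<epsilon>. \<theta> k * d k) \<le> \<gamma>\<^sup>2 * \<epsilon>\<^sup>2 * S" using sumd by linarith
    thus ?thesis using Sp by (simp add: pos_divide_le_eq)
  qed
  have infd: "(infdist 0 (subdiff_plus_ind X Y f (zbar (zs k))))\<^sup>2 \<le> 4 * \<rho>\<^sup>2 * d k" for k
  proof -
    let ?w = "zs k" and ?zb = "zbar (zs k)"
    have sv: "\<forall>z'\<in>?Z. inner (F ?zb + (2 * \<rho>) *\<^sub>R (?zb - ?w)) (z' - ?zb) \<ge> 0"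
      using svi[of ?w] unfolding svi_sol_def G_def by blast
    have mem: "- ((2 * \<rho>) *\<^sub>R (?zb - ?w)) \<in> subdiff_plus_ind X Y f ?zb"
      using subdiff_elem[of ?zb X Y F "(2 * \<rho>) *\<^sub>R (?zb - ?w)" f, OF zbarZ sv] assms(9) zbarZ by blast
    have "infdist 0 (subdiff_plus_ind X Y f ?zb) \<le> dist 0 (- ((2 * \<rho>) *\<^sub>R (?zb - ?w)))"
      using infdist_le[OF mem] .
    also have "\<dots> = 2 * \<rho> * norm (?w - ?zb)" using rho by (simp add: norm_minus_commute)
    finally have "(infdist 0 (subdiff_plus_ind X Y f ?zb))\<^sup>2 \<le> (2 * \<rho> * norm (?w - ?zb))\<^sup>2"
      using infdist_nonneg by (intro power_mono) auto
    thus ?thesis unfolding d_def by (simp add: power_mult_distrib)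
  qed
  have c2: "(\<Sum>k<K \<epsilon>. \<theta> k * (infdist 0 (subdiff_plus_ind X Y f (zbar (zs k))))\<^sup>2) / S \<le> \<epsilon>\<^sup>2"
  proof -
    have "(\<Sum>k<K \<epsilon>. \<theta> k * (infdist 0 (subdiff_plus_ind X Y f (zbar (zs k))))\<^sup>2)
        \<le> (\<Sum>k<K \<epsilon>. 4 * \<rho>\<^sup>2 * (\<theta> k * d k))"
      using infd th0 by (intro sum_mono) (smt (verit) mult_left_mono mult.left_commute)
    also have "\<dots> = 4 * \<rho>\<^sup>2 * (\<Sum>k<K \<epsilon>. \<theta> k * d k)" by (simp add: sum_distrib_left)
    finally have "(\<Sum>k<K \<epsilon>. \<theta> k * (infdist 0 (subdiff_plus_ind X Y f (zbar (zs k))))\<^sup>2) / S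
        \<le> 4 * \<rho>\<^sup>2 * (\<Sum>k<K \<epsilon>. \<theta> k * d k) / S"
      using th0 by (intro divide_right_mono) (auto simp: S_def sum_nonneg)
    also have "\<dots> = 4 * \<rho>\<^sup>2 * ((\<Sum>k<K \<epsilon>. \<theta> k * d k) / S)" by simp
    also have "\<dots> \<le> 4 * \<rho>\<^sup>2 * (\<gamma>\<^sup>2 * \<epsilon>\<^sup>2)" using c1 by (intro mult_left_mono) auto
    also have "\<dots> = \<epsilon>\<^sup>2" unfolding assms(16) using rho by (simp add: field_simps power2_eq_square)
    finally show ?thesis .
  qed
  have c3: "L > 0 \<longrightarrow> (\<lambda>e. real (\<Sum>k<K e. T k)) \<in> O[at_right 0](\<lambda>e. ln (1 / e) * L\<^sup>2 / e\<^sup>2)"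
  proof
    assume Lp: "L > 0"
    show "(\<lambda>e. real (\<Sum>k<K e. T k)) \<in> O[at_right 0](\<lambda>e. ln (1 / e) * L\<^sup>2 / e\<^sup>2)"
      unfolding assms(17,18)
      by (rule bigo_part) (use rho D0 assms(13) Lp in auto)
  qed
  show ?thesis using c1 c2 c3 unfolding S_def d_def by blast
qed

end
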